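(* In the four-direction cube setting with the random model described in the context, let $k\ge0$, let $R_b=\{r\in R:X_r=0\}$, and let $C_b=\mathcal N(R_b)\setminus\mathcal N(R\setminus R_b)$ (equivalently, the set of cells none of whose four rays is a zero measurement). For integers $a$ write $\rho_a:=d-|a|$, and define \[ F(a_1,a_2)=\Big(1-\tfrac{\rho_{a_1}+\rho_{a_2}-1}{d^3}\Big)^k,\quad F(a_1,a_2,a_3)=\Big(1-\tfrac{\rho_{a_1}+\rho_{a_2}+\rho_{a_3}-2}{d^3}\Big)^k, \] \[ F(a_1,a_2,a_3,a_4)=\Big(1-\tfrac{\rho_{a_1}+\rho_{a_2}+\rho_{a_3}+\rho_{a_4}-3}{d^3}\Big)^k. \] Then \[ N_C(k):=\mathbb{E}[|C_b|]=d^3-N_C^1+N_C^2-N_C^3+N_C^4, \] where \[ N_C^1=4d\Big(d\big(1-\tfrac1{d^2}\big)^k+2\sum_{s=1}^{d-1}s\big(1-\tfrac{s}{d^3}\big)^k\Big), \] \[ N_C^2=2d\sum_{i,l\in[d]}F(l+i-1-d,\,i-l)+4\sum_{i,j,l\in[d]}F(l-i,\,l-j), \] \[ N_C^3=2\sum_{i,j,l\in[d]}\Big(F(l+i-1-d,\,l-i,\,l-j)+F(l-i,\,l-j,\,l+j-1-d)\Big), \] \[ N_C^4=\sum_{i,j,l\in[d]}F(l+i-1-d,\,l-i,\,l+j-1-d,\,l-j). \]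
   Context: Cube setting. Let $d\ge2$ be an integer and $[d]=\{1,\dots,d\}$. The cells are $C=\{(i,j,l): i,j,l\in[d]\}$ (voxels of $[0,d]^3$), $|C|=d^3$. There are four families of rays (projection directions with normals proportional to $(-1,0,1),(1,0,1),(0,-1,1),(0,1,1)$), each ray identified with the set of cells it meets: for $s\in\{1-d,\dots,d-1\}$ and $t\in[d]$, $r^1_{s,t}=\{(i,j,l)\in C: i+l-1-d=s,\ j=t\}$ and $r^2_{s,t}=\{(i,j,l)\in C: i-l=s,\ j=t\}$; for $s\in[d]$ and $t\in\{1-d,\dots,d-1\}$, $r^3_{s,t}=\{(i,j,l)\in C: i=s,\ j+l-1-d=t\}$ and $r^4_{s,t}=\{(i,j,l)\in C: i=s,\ j-l=t\}$. $R_a$ is the family of rays $r^a_{\cdot,\cdot}$, $R=R_1\cup R_2\cup R_3\cup R_4$, $|R|=4d(2d-1)$; $|r|$ is the number of cells of ray $r$ (so $|r^{1}_{s,t}|=|r^2_{s,t}|=d-|s|$ and $|r^3_{s,t}|=|r^4_{s,t}|=d-|t|$). Each cell lies on exactly one ray of each family. Random model: $k$ cells are drawn independently and uniformly from $C$ (with replacement). For $r\in R$, $X_r\in\{0,1\}$ equals $1$ (a "zero measurement") iff none of the drawn cells lies on $r$. For a set $S$ of rays, $\mathcal N(S)$ is the set of cells lying on at least one ray of $S$. *)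

theory Defs
  imports "HOL-Probability.Probability"
begin

type_synonym cell = "int \<times> int \<times> int"

definition cells :: "nat \<Rightarrow> cell set" where
  "cells d = {1..int d} \<times> {1..int d} \<times> {1..int d}"

text \<open>Rays are indexed by (a,s,t) with family a in {1,2,3,4}.\<close>
type_synonym ray = "nat \<times> int \<times> int"

definition rays :: "nat \<Rightarrow> ray set" where
  "rays d = ({1,2} \<times> {1 - int d..int d - 1} \<times> {1..int d})
          \<union> ({3,4} \<times> {1..int d} \<times> {1 - int d..int d - 1})"

definition ray_cells :: "nat \<Rightarrow> ray \<Rightarrow> cell set" where
  "ray_cells d r = (case r of (a, s, t) \<Rightarrow>
     {(i, j, l) \<in> cells d.
        (a = 1 \<and> i + l - 1 - int d = s \<and> j = t) \<or>
        (a = 2 \<and> i - l = s \<and> j = t) \<or>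
        (a = 3 \<and> i = s \<and> j + l - 1 - int d = t) \<or>
        (a = 4 \<and> i = s \<and> j - l = t)})"

definition nbhd :: "nat \<Rightarrow> ray set \<Rightarrow> cell set" where
  "nbhd d S = (\<Union>r\<in>S. ray_cells d r)"

definition sample :: "nat \<Rightarrow> nat \<Rightarrow> (nat \<Rightarrow> cell) pmf" where
  "sample d k = Pi_pmf {..<k} (0, 0, 0) (\<lambda>_. pmf_of_set (cells d))"

definition Xmeas :: "nat \<Rightarrow> nat \<Rightarrow> (nat \<Rightarrow> cell) \<Rightarrow> ray \<Rightarrow> nat" where
  "Xmeas d k w r = (if (\<forall>m<k. w m \<notin> ray_cells d r) then 1 else 0)"

definition Rb :: "nat \<Rightarrow> nat \<Rightarrow> (nat \<Rightarrow> cell) \<Rightarrow> ray set" where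
  "Rb d k w = {r \<in> rays d. Xmeas d k w r = 0}"

definition Cb :: "nat \<Rightarrow> nat \<Rightarrow> (nat \<Rightarrow> cell) \<Rightarrow> cell set" where
  "Cb d k w = nbhd d (Rb d k w) - nbhd d (rays d - Rb d k w)"

definition rho :: "nat \<Rightarrow> int \<Rightarrow> real" where
  "rho d a = real d - real_of_int \<bar>a\<bar>"

definition F2 :: "nat \<Rightarrow> nat \<Rightarrow> int \<Rightarrow> int \<Rightarrow> real" where
  "F2 d k a1 a2 = (1 - (rho d a1 + rho d a2 - 1) / real d ^ 3) ^ k"

definition F3 :: "nat \<Rightarrow> nat \<Rightarrow> int \<Rightarrow> int \<Rightarrow> int \<Rightarrow> real" where
  "F3 d k a1 a2 a3 = (1 - (rho d a1 + rho d a2 + rho d a3 - 2) / real d ^ 3) ^ k"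

definition F4 :: "nat \<Rightarrow> nat \<Rightarrow> int \<Rightarrow> int \<Rightarrow> int \<Rightarrow> int \<Rightarrow> real" where
  "F4 d k a1 a2 a3 a4 =
     (1 - (rho d a1 + rho d a2 + rho d a3 + rho d a4 - 3) / real d ^ 3) ^ k"

definition NC1 :: "nat \<Rightarrow> nat \<Rightarrow> real" where
  "NC1 d k = 4 * real d * (real d * (1 - 1 / real d ^ 2) ^ k
              + 2 * (\<Sum>s = 1..int d - 1. real_of_int s * (1 - real_of_int s / real d ^ 3) ^ k))"

definition NC2 :: "nat \<Rightarrow> nat \<Rightarrow> real" where
  "NC2 d k = 2 * real d * (\<Sum>i = 1..int d. \<Sum>l = 1..int d. F2 d k (l + i - 1 - int d) (i - l))
     + 4 * (\<Sum>i = 1..int d. \<Sum>j = 1..int d. \<Sum>l = 1..int d. F2 d k (l - i) (l - j))"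

definition NC3 :: "nat \<Rightarrow> nat \<Rightarrow> real" where
  "NC3 d k = 2 * (\<Sum>i = 1..int d. \<Sum>j = 1..int d. \<Sum>l = 1..int d.
       F3 d k (l + i - 1 - int d) (l - i) (l - j) + F3 d k (l - i) (l - j) (l + j - 1 - int d))"

definition NC4 :: "nat \<Rightarrow> nat \<Rightarrow> real" where
  "NC4 d k = (\<Sum>i = 1..int d. \<Sum>j = 1..int d. \<Sum>l = 1..int d.
       F4 d k (l + i - 1 - int d) (l - i) (l + j - 1 - int d) (l - j))"

end

theory Submission
  imports Defs
begin


definition u :: "nat \<Rightarrow> cell set \<Rightarrow> (nat \<Rightarrow> cell) \<Rightarrow> real" where
  "u k S w = (if \<forall>m<k. w m \<notin> S then 1 else 0)"

lemma card_cells: "card (cells d) = d ^ 3"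
  by (simp add: cells_def card_cartesian_product power3_eq_cube)

lemma finite_cells[simp]: "finite (cells d)"
  by (simp add: cells_def)

lemma cells_ne: "d > 0 \<Longrightarrow> cells d \<noteq> {}"
  by (auto simp: cells_def)

lemma finite_set_sample: "d > 0 \<Longrightarrow> finite (set_pmf (sample d k))"
proof -
  assume d: "d > 0"
  have "set_pmf (sample d k) = PiE_dflt {..<k} (0,0,0) (set_pmf \<circ> (\<lambda>_. pmf_of_set (cells d)))"
    unfolding sample_def by (rule set_Pi_pmf) simp
  then show ?thesis
    using d by (auto simp: cells_ne set_pmf_of_set intro!: finite_PiE_dflt)
qed

lemma E_u:
  assumes "d > 0" "S \<subseteq> cells d"
  shows "measure_pmf.expectation (sample d k) (u k S) = (1 - real (card S) / real d ^ 3) ^ k"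
proof -
  define f where "f = (\<lambda>(m::nat) (v::cell). if v \<in> S then 0 else (1::real))"
  have "u k S = (\<lambda>w. \<Prod>m\<in>{..<k}. f m (w m))"
    by (auto simp: u_def f_def fun_eq_iff prod_zero_iff)
  then have "measure_pmf.expectation (sample d k) (u k S)
     = (\<Prod>m\<in>{..<k}. measure_pmf.expectation (pmf_of_set (cells d)) (f m))"
    unfolding sample_def
    by (simp only:) (rule expectation_prod_Pi_pmf, auto simp: f_def intro!: integrable_measure_pmf_finite simp: cells_ne assms)
  moreover have "measure_pmf.expectation (pmf_of_set (cells d)) (f m) = 1 - real (card S) / real d ^ 3" for m
  proof -
    have "measure_pmf.expectation (pmf_of_set (cells d)) (f m) = sum (f m) (cells d) / card (cells d)"
      using assms by (intro integral_pmf_of_set) (auto simp: cells_ne)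
    also have "sum (f m) (cells d) = real (card (cells d - S))"
      by (simp add: f_def sum.If_cases Diff_eq)
    also have "real (card (cells d - S)) = real d ^ 3 - real (card S)"
    proof -
      have "card S \<le> card (cells d)" using assms by (simp add: card_mono)
      then show ?thesis using assms by (simp add: card_Diff_subset finite_subset of_nat_diff card_cells)
    qed
    finally show ?thesis using assms by (simp add: card_cells field_simps)
  qed
  ultimately show ?thesis by simp
qed




definition A1 :: "nat \<Rightarrow> int \<Rightarrow> int \<Rightarrow> int \<Rightarrow> cell set" where
  "A1 d i j l = {(x,y,z)\<in>cells d. x+z=i+l \<and> y=j}"
definition A2 :: "nat \<Rightarrow> int \<Rightarrow> int \<Rightarrow> int \<Rightarrow> cell set" where
  "A2 d i j l = {(x,y,z)\<in>cells d. x-z=i-l \<and> y=j}"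
definition A3 :: "nat \<Rightarrow> int \<Rightarrow> int \<Rightarrow> int \<Rightarrow> cell set" where
  "A3 d i j l = {(x,y,z)\<in>cells d. x=i \<and> y+z=j+l}"
definition A4 :: "nat \<Rightarrow> int \<Rightarrow> int \<Rightarrow> int \<Rightarrow> cell set" where
  "A4 d i j l = {(x,y,z)\<in>cells d. x=i \<and> y-z=j-l}"

lemma rc1: "ray_cells d (1, i+l-1-int d, j) = A1 d i j l"
  by (auto simp: ray_cells_def A1_def)
lemma rc1': "ray_cells d (Suc 0, i+l-1-int d, j) = A1 d i j l"
  using rc1 by simp
lemma rc2: "ray_cells d (2, i-l, j) = A2 d i j l"
  by (auto simp: ray_cells_def A2_def)
lemma rc3: "ray_cells d (3, i, j+l-1-int d) = A3 d i j l"
  by (auto simp: ray_cells_def A3_def)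
lemma rc4: "ray_cells d (4, i, j-l) = A4 d i j l"
  by (auto simp: ray_cells_def A4_def)

lemma rays_through:
  assumes "(i,j,l) \<in> cells d"
  shows "{r \<in> rays d. (i,j,l) \<in> ray_cells d r} =
    {(1, i+l-1-int d, j), (2, i-l, j), (3, i, j+l-1-int d), (4, i, j-l)}"
  using assms by (auto simp: ray_cells_def rays_def cells_def)

lemma Cb_iff:
  assumes "c \<in> cells d"
  shows "c \<in> Cb d k w \<longleftrightarrow> (\<forall>r\<in>{r \<in> rays d. c \<in> ray_cells d r}. \<exists>m<k. w m \<in> ray_cells d r)"
proof -
  have ne: "\<exists>r\<in>rays d. c \<in> ray_cells d r"
  proof -
    obtain i j l where c: "c = (i,j,l)" by (cases c) auto
    show ?thesis using rays_through[of i j l d] assms c by auto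
  qed
  show ?thesis
    unfolding Cb_def nbhd_def Rb_def Xmeas_def using ne
    by (auto split: if_splits; blast)
qed

lemma Cb_sub: "Cb d k w \<subseteq> cells d"
  by (auto simp: Cb_def nbhd_def ray_cells_def)

lemma u_Un: "u k (A \<union> B) w = u k A w * u k B w"
  by (auto simp: u_def)

lemma ind_Cb:
  assumes "(i,j,l) \<in> cells d"
  shows "(if (i,j,l) \<in> Cb d k w then 1 else 0 :: real) =
    (1 - u k (A1 d i j l) w) * (1 - u k (A2 d i j l) w) * (1 - u k (A3 d i j l) w) * (1 - u k (A4 d i j l) w)"
  using Cb_iff[OF assms, of k w] rays_through[OF assms]
  by (simp add: rc1' rc2 rc3 rc4 u_def)




lemma card_img_interval:
  assumes "inj f" shows "card (f ` {a..b::int}) = nat (b - a + 1)"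
  using assms by (simp add: card_image inj_on_subset)

lemma card_A1:
  assumes "(i,j,l) \<in> cells d"
  shows "real (card (A1 d i j l)) = rho d (i+l-1-int d)"
proof -
  have "A1 d i j l = (\<lambda>x. (x, j, i+l-x)) ` {max 1 (i+l-int d) .. min (int d) (i+l-1)}"
    using assms by (auto simp: A1_def cells_def image_iff)
  moreover have "inj (\<lambda>x::int. (x, j, i+l-x))" by (auto simp: inj_def)
  ultimately have "card (A1 d i j l) = nat (min (int d) (i+l-1) - max 1 (i+l-int d) + 1)"
    using card_img_interval by simp
  then show ?thesis using assms by (auto simp: rho_def cells_def)
qed

lemma card_A2:
  assumes "(i,j,l) \<in> cells d"
  shows "real (card (A2 d i j l)) = rho d (i-l)"
proof -
  have "A2 d i j l = (\<lambda>x. (x, j, x-(i-l))) ` {max 1 (1+i-l) .. min (int d) (int d+i-l)}"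
    using assms by (auto simp: A2_def cells_def image_iff)
  moreover have "inj (\<lambda>x::int. (x, j, x-(i-l)))" by (auto simp: inj_def)
  ultimately have "card (A2 d i j l) = nat (min (int d) (int d+i-l) - max 1 (1+i-l) + 1)"
    using card_img_interval by simp
  then show ?thesis using assms by (auto simp: rho_def cells_def)
qed

lemma card_A3:
  assumes "(i,j,l) \<in> cells d"
  shows "real (card (A3 d i j l)) = rho d (j+l-1-int d)"
proof -
  have "A3 d i j l = (\<lambda>y. (i, y, j+l-y)) ` {max 1 (j+l-int d) .. min (int d) (j+l-1)}"
    using assms by (auto simp: A3_def cells_def image_iff)
  moreover have "inj (\<lambda>y::int. (i, y, j+l-y))" by (auto simp: inj_def)
  ultimately have "card (A3 d i j l) = nat (min (int d) (j+l-1) - max 1 (j+l-int d) + 1)"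
    using card_img_interval by simp
  then show ?thesis using assms by (auto simp: rho_def cells_def)
qed

lemma card_A4:
  assumes "(i,j,l) \<in> cells d"
  shows "real (card (A4 d i j l)) = rho d (j-l)"
proof -
  have "A4 d i j l = (\<lambda>y. (i, y, y-(j-l))) ` {max 1 (1+j-l) .. min (int d) (int d+j-l)}"
    using assms by (auto simp: A4_def cells_def image_iff)
  moreover have "inj (\<lambda>y::int. (i, y, y-(j-l)))" by (auto simp: inj_def)
  ultimately have "card (A4 d i j l) = nat (min (int d) (int d+j-l) - max 1 (1+j-l) + 1)"
    using card_img_interval by simp
  then show ?thesis using assms by (auto simp: rho_def cells_def)
qed

lemma I12: "(i,j,l) \<in> cells d \<Longrightarrow> A1 d i j l \<inter> A2 d i j l = {(i,j,l)}"
  by (auto simp: A1_def A2_def)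
lemma I13: "(i,j,l) \<in> cells d \<Longrightarrow> A1 d i j l \<inter> A3 d i j l = {(i,j,l)}"
  by (auto simp: A1_def A3_def)
lemma I14: "(i,j,l) \<in> cells d \<Longrightarrow> A1 d i j l \<inter> A4 d i j l = {(i,j,l)}"
  by (auto simp: A1_def A4_def)
lemma I23: "(i,j,l) \<in> cells d \<Longrightarrow> A2 d i j l \<inter> A3 d i j l = {(i,j,l)}"
  by (auto simp: A2_def A3_def)
lemma I24: "(i,j,l) \<in> cells d \<Longrightarrow> A2 d i j l \<inter> A4 d i j l = {(i,j,l)}"
  by (auto simp: A2_def A4_def)
lemma I34: "(i,j,l) \<in> cells d \<Longrightarrow> A3 d i j l \<inter> A4 d i j l = {(i,j,l)}"
  by (auto simp: A3_def A4_def)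

lemma card_Un1:
  assumes "finite X" "finite Y" "X \<inter> Y = {c}"
  shows "real (card (X \<union> Y)) = real (card X) + real (card Y) - 1"
  using card_Un_Int[OF assms(1,2)] assms(3) by simp




definition G :: "nat \<Rightarrow> nat \<Rightarrow> real \<Rightarrow> real" where
  "G d k x = (1 - x / real d ^ 3) ^ k"

lemma cell_expect:
  assumes c: "(i,j,l) \<in> cells d" and d: "d > 0"
  defines "p1 \<equiv> rho d (i+l-1-int d)" and "p2 \<equiv> rho d (i-l)"
      and "p3 \<equiv> rho d (j+l-1-int d)" and "p4 \<equiv> rho d (j-l)"
  shows "measure_pmf.expectation (sample d k) (\<lambda>w. if (i,j,l) \<in> Cb d k w then 1 else 0)
    = 1 - (G d k p1 + G d k p2 + G d k p3 + G d k p4)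
      + (G d k (p1+p2-1) + G d k (p1+p3-1) + G d k (p1+p4-1) + G d k (p2+p3-1) + G d k (p2+p4-1) + G d k (p3+p4-1))
      - (G d k (p1+p2+p3-2) + G d k (p1+p2+p4-2) + G d k (p1+p3+p4-2) + G d k (p2+p3+p4-2))
      + G d k (p1+p2+p3+p4-3)"
proof -
  define a1 where "a1 = A1 d i j l"
  define a2 where "a2 = A2 d i j l"
  define a3 where "a3 = A3 d i j l"
  define a4 where "a4 = A4 d i j l"
  have sub: "a1 \<subseteq> cells d" "a2 \<subseteq> cells d" "a3 \<subseteq> cells d" "a4 \<subseteq> cells d"
    by (auto simp: a1_def a2_def a3_def a4_def A1_def A2_def A3_def A4_def)
  have fin: "finite a1" "finite a2" "finite a3" "finite a4"
    using sub by (auto intro: finite_subset)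
  have I: "a1 \<inter> a2 = {(i,j,l)}" "a1 \<inter> a3 = {(i,j,l)}" "a1 \<inter> a4 = {(i,j,l)}"
     "a2 \<inter> a3 = {(i,j,l)}" "a2 \<inter> a4 = {(i,j,l)}" "a3 \<inter> a4 = {(i,j,l)}"
    using I12[OF c] I13[OF c] I14[OF c] I23[OF c] I24[OF c] I34[OF c]
    by (simp_all add: a1_def a2_def a3_def a4_def)
  have cr: "real (card a1) = p1" "real (card a2) = p2" "real (card a3) = p3" "real (card a4) = p4"
    using card_A1[OF c] card_A2[OF c] card_A3[OF c] card_A4[OF c]
    by (simp_all add: a1_def a2_def a3_def a4_def p1_def p2_def p3_def p4_def)
  have c12: "real (card (a1 \<union> a2)) = p1 + p2 - 1" using card_Un1[OF fin(1,2) I(1)] cr by simp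
  have c13: "real (card (a1 \<union> a3)) = p1 + p3 - 1" using card_Un1[OF fin(1,3) I(2)] cr by simp
  have c14: "real (card (a1 \<union> a4)) = p1 + p4 - 1" using card_Un1[OF fin(1,4) I(3)] cr by simp
  have c23: "real (card (a2 \<union> a3)) = p2 + p3 - 1" using card_Un1[OF fin(2,3) I(4)] cr by simp
  have c24: "real (card (a2 \<union> a4)) = p2 + p4 - 1" using card_Un1[OF fin(2,4) I(5)] cr by simp
  have c34: "real (card (a3 \<union> a4)) = p3 + p4 - 1" using card_Un1[OF fin(3,4) I(6)] cr by simp
  have c123: "real (card (a1 \<union> a2 \<union> a3)) = p1 + p2 + p3 - 2"
  proof -
    have "(a1 \<union> a2) \<inter> a3 = {(i,j,l)}" by (simp add: Int_Un_distrib2 I)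
    then show ?thesis using card_Un1[of "a1 \<union> a2" a3] fin c12 cr by simp
  qed
  have c124: "real (card (a1 \<union> a2 \<union> a4)) = p1 + p2 + p4 - 2"
  proof -
    have "(a1 \<union> a2) \<inter> a4 = {(i,j,l)}" by (simp add: Int_Un_distrib2 I)
    then show ?thesis using card_Un1[of "a1 \<union> a2" a4] fin c12 cr by simp
  qed
  have c134: "real (card (a1 \<union> a3 \<union> a4)) = p1 + p3 + p4 - 2"
  proof -
    have "(a1 \<union> a3) \<inter> a4 = {(i,j,l)}" by (simp add: Int_Un_distrib2 I)
    then show ?thesis using card_Un1[of "a1 \<union> a3" a4] fin c13 cr by simp
  qed
  have c234: "real (card (a2 \<union> a3 \<union> a4)) = p2 + p3 + p4 - 2"
  proof -
    have "(a2 \<union> a3) \<inter> a4 = {(i,j,l)}" by (simp add: Int_Un_distrib2 I)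
    then show ?thesis using card_Un1[of "a2 \<union> a3" a4] fin c23 cr by simp
  qed
  have c1234: "real (card (a1 \<union> a2 \<union> a3 \<union> a4)) = p1 + p2 + p3 + p4 - 3"
  proof -
    have "(a1 \<union> a2 \<union> a3) \<inter> a4 = {(i,j,l)}" by (simp add: Int_Un_distrib2 I)
    then show ?thesis using card_Un1[of "a1 \<union> a2 \<union> a3" a4] fin c123 cr by simp
  qed
  let ?u = "u k"
  have pw: "(\<lambda>w. if (i,j,l) \<in> Cb d k w then 1 else 0 :: real) = (\<lambda>w.
      1 - (?u a1 w + ?u a2 w + ?u a3 w + ?u a4 w)
      + (?u (a1 \<union> a2) w + ?u (a1 \<union> a3) w + ?u (a1 \<union> a4) w + ?u (a2 \<union> a3) w + ?u (a2 \<union> a4) w + ?u (a3 \<union> a4) w)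
      - (?u (a1 \<union> a2 \<union> a3) w + ?u (a1 \<union> a2 \<union> a4) w + ?u (a1 \<union> a3 \<union> a4) w + ?u (a2 \<union> a3 \<union> a4) w)
      + ?u (a1 \<union> a2 \<union> a3 \<union> a4) w)"
    by (rule ext, subst ind_Cb[OF c], simp only: u_Un a1_def a2_def a3_def a4_def, algebra)
  have int: "integrable (measure_pmf (sample d k)) f" for f :: "_ \<Rightarrow> real"
    using finite_set_sample[OF d] by (rule integrable_measure_pmf_finite)
  have E: "measure_pmf.expectation (sample d k) (?u S) = G d k (real (card S))" if "S \<subseteq> cells d" for S
    using E_u[OF d that] by (simp add: G_def)
  show ?thesis
    unfolding pw
    apply (simp only: Bochner_Integration.integral_add[OF int int] Bochner_Integration.integral_diff[OF int int])
    apply (simp add: E sub c12 c13 c14 c23 c24 c34 c123 c124 c134 c234 c1234 cr)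
    done
qed




lemma sum_reflect: "(\<Sum>x=a..b. f x) = (\<Sum>x=a..(b::int). f (a+b-x))"
  by (rule sum.reindex_bij_witness[of _ "\<lambda>x. a+b-x" "\<lambda>x. a+b-x"]) auto

lemma sum_neg: "(\<Sum>x=-b..-a. f x) = (\<Sum>x=a..(b::int). f (-x))"
  by (rule sum.reindex_bij_witness[of _ "\<lambda>x. -x" "\<lambda>x. -x"]) auto

lemma sum_split0:
  assumes "n \<ge> 1"
  shows "(\<Sum>x=-n..(n::int). f x) = (\<Sum>x=-n..-1. f x) + f 0 + (\<Sum>x=1..n. f x)"
proof -
  have "{-n..n} = {-n..-1} \<union> ({0} \<union> {1..n})" using assms by auto
  then have "(\<Sum>x=-n..n. f x) = (\<Sum>x\<in>{-n..-1} \<union> ({0} \<union> {1..n}). f x)" by simp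
  also have "\<dots> = (\<Sum>x=-n..-1. f x) + (f 0 + (\<Sum>x=1..n. f x))"
  proof -
    have "sum f ({-n..-1} \<union> ({0} \<union> {1..n})) = sum f {-n..-1} + sum f ({0} \<union> {1..n})"
      by (rule sum.union_disjoint) auto
    moreover have "sum f ({0} \<union> {1..n}) = f 0 + sum f {1..n}" by simp
    ultimately show ?thesis by simp
  qed
  finally show ?thesis by (simp add: add.assoc)
qed

lemma fiber_card:
  assumes "1 - int d \<le> s" "s \<le> int d - 1"
  shows "card {i\<in>{1..int d}. s+1 \<le> i \<and> i \<le> s + int d} = nat (int d - \<bar>s\<bar>)"
proof -
  have "{i\<in>{1..int d}. s+1 \<le> i \<and> i \<le> s + int d} = {max 1 (s+1) .. min (int d) (s + int d)}"
    by auto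
  then show ?thesis using assms by auto
qed

lemma L2:
  fixes g :: "real \<Rightarrow> real"
  assumes d: "d \<ge> 1"
  shows "(\<Sum>i=1..int d. \<Sum>l=1..int d. g (rho d (i+l-1-int d)))
     = real d * g (real d) + 2 * (\<Sum>s=1..int d - 1. real_of_int s * g (real_of_int s))"
proof -
  let ?I = "{1..int d}" and ?J = "{1 - int d..int d - 1}"
  let ?h = "\<lambda>s. g (rho d s)"
  have inner: "(\<Sum>l\<in>?I. ?h (i+l-1-int d)) = (\<Sum>s\<in>{s\<in>?J. s+1 \<le> i \<and> i \<le> s + int d}. ?h s)"
    if "i \<in> ?I" for i
    by (rule sum.reindex_bij_witness[of _ "\<lambda>s. s+1+int d-i" "\<lambda>l. i+l-1-int d"]) (use that in auto)
  have "(\<Sum>i\<in>?I. \<Sum>l\<in>?I. ?h (i+l-1-int d)) = (\<Sum>i\<in>?I. \<Sum>s\<in>{s\<in>?J. s+1 \<le> i \<and> i \<le> s + int d}. ?h s)"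
    by (rule sum.cong[OF refl], rule inner)
  also have "\<dots> = (\<Sum>s\<in>?J. \<Sum>i\<in>{i\<in>?I. s+1 \<le> i \<and> i \<le> s + int d}. ?h s)"
    by (rule sum.swap_restrict) auto
  also have "\<dots> = (\<Sum>s\<in>?J. (real d - \<bar>real_of_int s\<bar>) * g (real d - \<bar>real_of_int s\<bar>))"
  proof (rule sum.cong[OF refl])
    fix s assume s: "s \<in> ?J"
    have "real (card {i\<in>?I. s+1 \<le> i \<and> i \<le> s + int d}) = real d - \<bar>real_of_int s\<bar>"
    proof -
      have nn: "0 \<le> int d - \<bar>s\<bar>" using s by auto
      have "real (nat (int d - \<bar>s\<bar>)) = real_of_int (int d - \<bar>s\<bar>)" using nn by (rule of_nat_nat)
      then show ?thesis using fiber_card[of d s] s by simp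
    qed
    then show "(\<Sum>i\<in>{i\<in>?I. s+1 \<le> i \<and> i \<le> s + int d}. ?h s) = (real d - \<bar>real_of_int s\<bar>) * g (real d - \<bar>real_of_int s\<bar>)"
      by (simp only: sum_constant) (simp add: rho_def)
  qed
  also have "\<dots> = (\<Sum>s=-(int d - 1)..int d - 1. (real d - \<bar>real_of_int s\<bar>) * g (real d - \<bar>real_of_int s\<bar>))"
    by simp
  also have "\<dots> = (\<Sum>s=1..int d - 1. (real d - \<bar>real_of_int (-s)\<bar>) * g (real d - \<bar>real_of_int (-s)\<bar>))
      + real d * g (real d) + (\<Sum>s=1..int d - 1. (real d - \<bar>real_of_int s\<bar>) * g (real d - \<bar>real_of_int s\<bar>))"
  proof (cases "d = 1")
    case True then show ?thesis by simp
  next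
    case False
    define \<phi> where "\<phi> = (\<lambda>s::int. (real d - \<bar>real_of_int s\<bar>) * g (real d - \<bar>real_of_int s\<bar>))"
    have n: "(\<Sum>s=-(int d - 1)..-1. \<phi> s) = (\<Sum>s=1..int d - 1. \<phi> (-s))"
      using sum_neg[where f=\<phi> and a=1 and b="int d - 1"] by simp
    have "(\<Sum>s=-(int d - 1)..int d - 1. \<phi> s) = (\<Sum>s=-(int d - 1)..-1. \<phi> s) + \<phi> 0 + (\<Sum>s=1..int d - 1. \<phi> s)"
      using d False by (intro sum_split0) auto
    then show ?thesis unfolding n by (simp add: \<phi>_def)
  qed
  also have "\<dots> = real d * g (real d) + 2 * (\<Sum>s=1..int d - 1. real_of_int s * g (real_of_int s))"
  proof -
    have R: "(\<Sum>s=1..int d - 1. (real d - real_of_int s) * g (real d - real_of_int s))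
       = (\<Sum>s=1..int d - 1. real_of_int s * g (real_of_int s))"
      by (subst sum_reflect) (rule sum.cong, auto)
    have A: "(\<Sum>s=1..int d - 1. (real d - \<bar>real_of_int s\<bar>) * g (real d - \<bar>real_of_int s\<bar>))
       = (\<Sum>s=1..int d - 1. (real d - real_of_int s) * g (real d - real_of_int s))"
      by (rule sum.cong) auto
    have B: "(\<Sum>s=1..int d - 1. (real d - \<bar>real_of_int (-s)\<bar>) * g (real d - \<bar>real_of_int (-s)\<bar>))
       = (\<Sum>s=1..int d - 1. (real d - real_of_int s) * g (real d - real_of_int s))"
      by (rule sum.cong) auto
    show ?thesis unfolding A B R by simp
  qed
  finally show ?thesis by simp
qed




lemma F2_G: "F2 d k a b = G d k (rho d a + rho d b - 1)" by (simp add: F2_def G_def)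
lemma F3_G: "F3 d k a b c = G d k (rho d a + rho d b + rho d c - 2)" by (simp add: F3_def G_def)
lemma F4_G: "F4 d k a b c e = G d k (rho d a + rho d b + rho d c + rho d e - 3)" by (simp add: F4_def G_def)

lemma rho_swap: "rho d (a - b) = rho d (b - a)" by (simp add: rho_def abs_minus_commute)

definition S3 :: "nat \<Rightarrow> (int \<Rightarrow> int \<Rightarrow> int \<Rightarrow> real) \<Rightarrow> real" where
  "S3 d f = (\<Sum>i=1..int d. \<Sum>j=1..int d. \<Sum>l=1..int d. f i j l)"

lemma S3_add: "S3 d (\<lambda>i j l. f i j l + g i j l) = S3 d f + S3 d g"
  by (simp add: S3_def sum.distrib)
lemma S3_diff: "S3 d (\<lambda>i j l. f i j l - g i j l) = S3 d f - S3 d g"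
  by (simp add: S3_def sum_subtractf)
lemma S3_cmult: "S3 d (\<lambda>i j l. c * f i j l) = c * S3 d f"
  by (simp add: S3_def sum_distrib_left)
lemma S3_const: "S3 d (\<lambda>i j l. 1) = real d ^ 3"
  by (simp add: S3_def power3_eq_cube)
lemma S3_cong:
  assumes "\<And>i j l. i \<in> {1..int d} \<Longrightarrow> j \<in> {1..int d} \<Longrightarrow> l \<in> {1..int d} \<Longrightarrow> f i j l = g i j l"
  shows "S3 d f = S3 d g"
  unfolding S3_def using assms by (intro sum.cong refl) auto
lemma S3_ri: "S3 d f = S3 d (\<lambda>i j l. f (1 + int d - i) j l)"
  unfolding S3_def by (rule sum_reflect)
lemma S3_rj: "S3 d f = S3 d (\<lambda>i j l. f i (1 + int d - j) l)"
  unfolding S3_def by (intro sum.cong refl sum_reflect)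
lemma S3_rl: "S3 d f = S3 d (\<lambda>i j l. f i j (1 + int d - l))"
  unfolding S3_def by (intro sum.cong refl sum_reflect)
lemma S3_noj: "S3 d (\<lambda>i j l. f i l) = real d * (\<Sum>i=1..int d. \<Sum>l=1..int d. f i l)"
  by (simp add: S3_def sum_distrib_left)
lemma S3_noi: "S3 d (\<lambda>i j l. f j l) = real d * (\<Sum>i=1..int d. \<Sum>l=1..int d. f i l)"
  by (simp add: S3_def)

lemma P13: "S3 d (\<lambda>i j l. G d k (rho d (i+l-1-int d) + rho d (j+l-1-int d) - 1))
   = S3 d (\<lambda>i j l. F2 d k (l-i) (l-j))"
  by (subst S3_rl, rule S3_cong) (simp only: F2_G, simp add: algebra_simps rho_swap)

lemma K_eq:
  assumes "d \<ge> 1"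
  shows "(\<Sum>i=1..int d. \<Sum>l=1..int d. G d k (rho d (i+l-1-int d)))
    = real d * (1 - 1 / real d ^ 2) ^ k + 2 * (\<Sum>s = 1..int d - 1. real_of_int s * (1 - real_of_int s / real d ^ 3) ^ k)"
proof -
  have "G d k (real d) = (1 - 1 / real d ^ 2) ^ k"
    using assms by (simp add: G_def power3_eq_cube power2_eq_square)
  then show ?thesis using L2[OF assms, of "G d k"] by (simp add: G_def)
qed

lemma T1sum:
  assumes "d \<ge> 1"
  shows "S3 d (\<lambda>i j l. G d k (rho d (i+l-1-int d)) + G d k (rho d (i-l)) + G d k (rho d (j+l-1-int d)) + G d k (rho d (j-l))) = NC1 d k"
proof -
  have a: "S3 d (\<lambda>i j l. G d k (rho d (i+l-1-int d))) = real d * (\<Sum>i=1..int d. \<Sum>l=1..int d. G d k (rho d (i+l-1-int d)))"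
    by (rule S3_noj)
  have b: "S3 d (\<lambda>i j l. G d k (rho d (i-l))) = S3 d (\<lambda>i j l. G d k (rho d (i+l-1-int d)))"
    by (subst S3_rl, rule S3_cong) (simp add: ac_simps)
  have c: "S3 d (\<lambda>i j l. G d k (rho d (j+l-1-int d))) = real d * (\<Sum>i=1..int d. \<Sum>l=1..int d. G d k (rho d (i+l-1-int d)))"
    by (rule S3_noi)
  have e: "S3 d (\<lambda>i j l. G d k (rho d (j-l))) = S3 d (\<lambda>i j l. G d k (rho d (j+l-1-int d)))"
    by (subst S3_rl, rule S3_cong) (simp add: ac_simps)
  show ?thesis
    apply (simp only: S3_add)
    apply (simp only: b e)
    apply (simp only: a c K_eq[OF assms] NC1_def)
    done
qed

lemma T2sum:
  "S3 d (\<lambda>i j l. G d k (rho d (i+l-1-int d) + rho d (i-l) - 1) + G d k (rho d (i+l-1-int d) + rho d (j+l-1-int d) - 1)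
     + G d k (rho d (i+l-1-int d) + rho d (j-l) - 1) + G d k (rho d (i-l) + rho d (j+l-1-int d) - 1)
     + G d k (rho d (i-l) + rho d (j-l) - 1) + G d k (rho d (j+l-1-int d) + rho d (j-l) - 1)) = NC2 d k"
proof -
  have p12: "S3 d (\<lambda>i j l. G d k (rho d (i+l-1-int d) + rho d (i-l) - 1)) = real d * (\<Sum>i=1..int d. \<Sum>l=1..int d. F2 d k (l + i - 1 - int d) (i - l))"
    by (subst S3_noj) (simp add: F2_def G_def ac_simps)
  have p34: "S3 d (\<lambda>i j l. G d k (rho d (j+l-1-int d) + rho d (j-l) - 1)) = real d * (\<Sum>i=1..int d. \<Sum>l=1..int d. F2 d k (l + i - 1 - int d) (i - l))"
    by (subst S3_noi) (simp add: F2_def G_def ac_simps)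
  have p13: "S3 d (\<lambda>i j l. G d k (rho d (i+l-1-int d) + rho d (j+l-1-int d) - 1)) = S3 d (\<lambda>i j l. F2 d k (l-i) (l-j))"
    by (subst S3_rl, rule S3_cong) (simp only: F2_G, simp add: algebra_simps rho_swap)
  have p14: "S3 d (\<lambda>i j l. G d k (rho d (i+l-1-int d) + rho d (j-l) - 1)) = S3 d (\<lambda>i j l. F2 d k (l-i) (l-j))"
    by (subst S3_ri, rule S3_cong) (simp only: F2_G, simp add: algebra_simps rho_swap)
  have p23: "S3 d (\<lambda>i j l. G d k (rho d (i-l) + rho d (j+l-1-int d) - 1)) = S3 d (\<lambda>i j l. F2 d k (l-i) (l-j))"
    by (subst S3_rj, rule S3_cong) (simp only: F2_G, simp add: algebra_simps rho_swap)
  have p24: "S3 d (\<lambda>i j l. G d k (rho d (i-l) + rho d (j-l) - 1)) = S3 d (\<lambda>i j l. F2 d k (l-i) (l-j))"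
    by (rule S3_cong) (simp only: F2_G, simp add: algebra_simps rho_swap)
  show ?thesis
    apply (simp only: S3_add)
    apply (simp only: p12 p13 p14 p23 p24 p34)
    apply (simp only: NC2_def S3_def[symmetric])
    done
qed

lemma T3sum:
  "S3 d (\<lambda>i j l. G d k (rho d (i+l-1-int d) + rho d (i-l) + rho d (j+l-1-int d) - 2)
     + G d k (rho d (i+l-1-int d) + rho d (i-l) + rho d (j-l) - 2)
     + G d k (rho d (i+l-1-int d) + rho d (j+l-1-int d) + rho d (j-l) - 2)
     + G d k (rho d (i-l) + rho d (j+l-1-int d) + rho d (j-l) - 2)) = NC3 d k"
proof -
  have t123: "S3 d (\<lambda>i j l. G d k (rho d (i+l-1-int d) + rho d (i-l) + rho d (j+l-1-int d) - 2))
     = S3 d (\<lambda>i j l. F3 d k (l + i - 1 - int d) (l - i) (l - j))"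
    by (subst S3_rj, rule S3_cong) (simp only: F3_G, simp add: algebra_simps rho_swap)
  have t124: "S3 d (\<lambda>i j l. G d k (rho d (i+l-1-int d) + rho d (i-l) + rho d (j-l) - 2))
     = S3 d (\<lambda>i j l. F3 d k (l + i - 1 - int d) (l - i) (l - j))"
    by (rule S3_cong) (simp only: F3_G, simp add: algebra_simps rho_swap)
  have t134: "S3 d (\<lambda>i j l. G d k (rho d (i+l-1-int d) + rho d (j+l-1-int d) + rho d (j-l) - 2))
     = S3 d (\<lambda>i j l. F3 d k (l - i) (l - j) (l + j - 1 - int d))"
    by (subst S3_ri, rule S3_cong) (simp only: F3_G, simp add: algebra_simps rho_swap)
  have t234: "S3 d (\<lambda>i j l. G d k (rho d (i-l) + rho d (j+l-1-int d) + rho d (j-l) - 2))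
     = S3 d (\<lambda>i j l. F3 d k (l - i) (l - j) (l + j - 1 - int d))"
    by (rule S3_cong) (simp only: F3_G, simp add: algebra_simps rho_swap)
  show ?thesis
    apply (simp only: S3_add)
    apply (simp only: t123 t124 t134 t234 NC3_def)
    apply (simp only: S3_def[symmetric])
    apply (simp only: S3_add)
    apply algebra
    done
qed

lemma T4sum:
  "S3 d (\<lambda>i j l. G d k (rho d (i+l-1-int d) + rho d (i-l) + rho d (j+l-1-int d) + rho d (j-l) - 3)) = NC4 d k"
  unfolding NC4_def S3_def
  by (intro sum.cong refl) (simp only: F4_G, simp add: algebra_simps rho_swap)

lemma sum_cells: "(\<Sum>c\<in>cells d. h c) = S3 d (\<lambda>i j l. h (i,j,l))"
  unfolding cells_def S3_def by (simp add: sum.cartesian_product)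

lemma S3_top: "S3 d (\<lambda>i j l. 1 - A i j l + B i j l - C i j l + E i j l)
   = S3 d (\<lambda>i j l. 1) - S3 d A + S3 d B - S3 d C + S3 d E"
  unfolding S3_def by (simp add: sum.distrib sum_subtractf)

theorem proposition4p2:
  fixes d k :: nat
  assumes "d \<ge> 2"
  shows "measure_pmf.expectation (sample d k) (\<lambda>w. real (card (Cb d k w)))
         = real d ^ 3 - NC1 d k + NC2 d k - NC3 d k + NC4 d k"
proof -
  have d1: "d \<ge> 1" and d0: "d > 0" using assms by auto
  have int: "integrable (measure_pmf (sample d k)) f" for f :: "_ \<Rightarrow> real"
    by (rule integrable_measure_pmf_finite[OF finite_set_sample[OF d0]])
  have cardeq: "(\<lambda>w. real (card (Cb d k w))) = (\<lambda>w. \<Sum>c\<in>cells d. if c \<in> Cb d k w then 1 else 0)"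
  proof (rule ext)
    fix w
    have e: "cells d \<inter> Cb d k w = Cb d k w" using Cb_sub by blast
    show "real (card (Cb d k w)) = (\<Sum>c\<in>cells d. if c \<in> Cb d k w then 1 else 0)"
      by (simp add: sum.If_cases e)
  qed
  have "measure_pmf.expectation (sample d k) (\<lambda>w. real (card (Cb d k w)))
      = (\<Sum>c\<in>cells d. measure_pmf.expectation (sample d k) (\<lambda>w. if c \<in> Cb d k w then 1 else 0))"
    unfolding cardeq by (rule Bochner_Integration.integral_sum, rule int)
  also have "\<dots> = S3 d (\<lambda>i j l. measure_pmf.expectation (sample d k) (\<lambda>w. if (i,j,l) \<in> Cb d k w then 1 else 0))"
    by (rule sum_cells)
  also have "\<dots> = S3 d (\<lambda>i j l. 1 - (G d k (rho d (i+l-1-int d)) + G d k (rho d (i-l)) + G d k (rho d (j+l-1-int d)) + G d k (rho d (j-l)))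
     + (G d k (rho d (i+l-1-int d) + rho d (i-l) - 1) + G d k (rho d (i+l-1-int d) + rho d (j+l-1-int d) - 1)
     + G d k (rho d (i+l-1-int d) + rho d (j-l) - 1) + G d k (rho d (i-l) + rho d (j+l-1-int d) - 1)
     + G d k (rho d (i-l) + rho d (j-l) - 1) + G d k (rho d (j+l-1-int d) + rho d (j-l) - 1))
     - (G d k (rho d (i+l-1-int d) + rho d (i-l) + rho d (j+l-1-int d) - 2)
     + G d k (rho d (i+l-1-int d) + rho d (i-l) + rho d (j-l) - 2)
     + G d k (rho d (i+l-1-int d) + rho d (j+l-1-int d) + rho d (j-l) - 2)
     + G d k (rho d (i-l) + rho d (j+l-1-int d) + rho d (j-l) - 2))
     + G d k (rho d (i+l-1-int d) + rho d (i-l) + rho d (j+l-1-int d) + rho d (j-l) - 3))"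
    by (rule S3_cong, rule cell_expect) (auto simp: cells_def d0)
  also have "\<dots> = real d ^ 3 - NC1 d k + NC2 d k - NC3 d k + NC4 d k"
    apply (subst S3_top)
    apply (simp only: S3_const T1sum[OF d1] T2sum T3sum T4sum)
    done
  finally show ?thesis .
qed


end
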